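(* For every $n\ge1$, finite set $A$ and $g\in\mathscr G_n(A)$, the simplicial set $\Gamma_g=\{x\in\Gamma(A)\mid\gamma(x)\le g\}$ (a simplicial subset of $\Gamma_n(A)$) has contractible geometric realisation $|\Gamma_g|$.
   Context: For a finite set $A$, $\Gamma(A)$ is the simplicial set whose $k$-simplices are sequences $x=(L_0,\dots,L_k)$ of linear orders on $A$, faces deleting and degeneracies repeating entries. For $a\neq b$, $w_x(a,b)$ is $1$ plus the number of $1\le i\le k$ such that the relative order of $a,b$ differs between $L_{i-1}$ and $L_i$; $\Gamma_n(A)$ is the simplicial subset of simplices with all weights $\le n$. $\gamma(x)$ is the complete directed graph on $A$ with edge $a\to b$ iff $a<b$ in $L_0$, of weight $w_x(a,b)$. $\mathscr G_n(A)$ is the poset of acyclic complete directed graphs on $A$ with edge weights in $\{1,\dots,n\}$ (exactly one directed weighted edge per two-element subset), ordered by $g\le h$ iff whenever $a\xrightarrow{v}b$ in $g$, either $a\xrightarrow{w}b$ in $h$ with $v\le w$ or $b\xrightarrow{w}a$ in $h$ with $v<w$. *)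

theory Defs
  imports "HOL-Analysis.Analysis" "HOL-Homology.Homology"
begin

definition linord_on :: "'a set \<Rightarrow> 'a rel \<Rightarrow> bool" where
  "linord_on A L \<longleftrightarrow> linear_order_on A L \<and> L \<subseteq> A \<times> A"

text \<open>k-simplices of Gamma(A): sequences (L_0,...,L_k) of linear orders, represented as
  nonempty lists of length k+1. Faces delete, degeneracies repeat entries.\<close>
definition Gamma :: "'a set \<Rightarrow> 'a rel list set" where
  "Gamma A = {x. x \<noteq> [] \<and> (\<forall>L\<in>set x. linord_on A L)}"

definition wt :: "'a rel list \<Rightarrow> 'a \<Rightarrow> 'a \<Rightarrow> nat" where
  "wt x a b = 1 + card {i. 1 \<le> i \<and> i < length x \<and>
                        (((a, b) \<in> x ! (i - 1)) \<noteq> ((a, b) \<in> x ! i))}"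

text \<open>A weighted directed graph on A is encoded as g :: 'a => 'a => nat, where
  g a b > 0 means there is an edge a -> b of weight g a b, and g a b = 0 means no edge.\<close>
definition wgraph_edges :: "('a \<Rightarrow> 'a \<Rightarrow> nat) \<Rightarrow> 'a rel" where
  "wgraph_edges g = {(a, b). 0 < g a b}"

definition G :: "nat \<Rightarrow> 'a set \<Rightarrow> ('a \<Rightarrow> 'a \<Rightarrow> nat) set" where
  "G n A = {g. (\<forall>a b. 0 < g a b \<longrightarrow> a \<in> A \<and> b \<in> A \<and> a \<noteq> b \<and> g a b \<le> n)
             \<and> (\<forall>a\<in>A. \<forall>b\<in>A. a \<noteq> b \<longrightarrow> (0 < g a b \<longleftrightarrow> \<not> 0 < g b a))
             \<and> acyclic (wgraph_edges g)}"

definition graph_le :: "('a \<Rightarrow> 'a \<Rightarrow> nat) \<Rightarrow> ('a \<Rightarrow> 'a \<Rightarrow> nat) \<Rightarrow> bool" where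
  "graph_le g h \<longleftrightarrow> (\<forall>a b. 0 < g a b \<longrightarrow>
      ((0 < h a b \<and> g a b \<le> h a b) \<or> (0 < h b a \<and> g a b < h b a)))"

definition gamma :: "'a set \<Rightarrow> 'a rel list \<Rightarrow> 'a \<Rightarrow> 'a \<Rightarrow> nat" where
  "gamma A x a b = (if a \<in> A \<and> b \<in> A \<and> a \<noteq> b \<and> (a, b) \<in> x ! 0 then wt x a b else 0)"

definition Gamma_g :: "'a set \<Rightarrow> ('a \<Rightarrow> 'a \<Rightarrow> nat) \<Rightarrow> 'a rel list set" where
  "Gamma_g A g = {x \<in> Gamma A. graph_le (gamma A x) g}"

text \<open>A point of the realisation is represented canonically (Eilenberg-Zilber) as a
  nondegenerate simplex together with an interior point of its simplex: a list of pairs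
  (L_i, t_i) with t_i > 0, consecutive L_i distinct. The map pt x sends a point t of the
  standard k-simplex to this normal form of [x, t] (drop zero barycentric coordinates =
  taking a face, merge consecutive repeated orders = undoing a degeneracy).\<close>
fun merge_adj :: "('b \<times> real) list \<Rightarrow> ('b \<times> real) list" where
  "merge_adj [] = []"
| "merge_adj [p] = [p]"
| "merge_adj ((L, s) # (L', s') # ps) =
     (if L = L' then merge_adj ((L, s + s') # ps) else (L, s) # merge_adj ((L', s') # ps))"

definition pt :: "'b list \<Rightarrow> (nat \<Rightarrow> real) \<Rightarrow> ('b \<times> real) list" where
  "pt x t = merge_adj (filter (\<lambda>p. 0 < snd p) (map (\<lambda>i. (x ! i, t i)) [0..<length x]))"

definition simplex_top :: "nat \<Rightarrow> (nat \<Rightarrow> real) topology" where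
  "simplex_top k = subtopology (powertop_real UNIV) (standard_simplex k)"

definition realization_carrier :: "'b list set \<Rightarrow> ('b \<times> real) list set" where
  "realization_carrier X = (\<Union>x\<in>X. pt x ` standard_simplex (length x - 1))"

text \<open>Colimit (final) topology with respect to all characteristic maps Delta^k -> |X|.\<close>
definition realization :: "'b list set \<Rightarrow> ('b \<times> real) list topology" where
  "realization X = topology (\<lambda>U. U \<subseteq> realization_carrier X \<and>
      (\<forall>x\<in>X. openin (simplex_top (length x - 1))
                {t \<in> standard_simplex (length x - 1). pt x t \<in> U}))"

end

theory Submission
  imports Defs
begin


definition sc :: "real \<Rightarrow> ('b \<times> real) \<Rightarrow> ('b \<times> real)" where
  "sc c p = (fst p, c * snd p)"

fun nadj :: "('b \<times> real) list \<Rightarrow> bool" where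
  "nadj [] = True" | "nadj [p] = True" | "nadj (p # q # r) = (fst p \<noteq> fst q \<and> nadj (q # r))"

lemma merge_adj_hd: "ps \<noteq> [] \<Longrightarrow> merge_adj ps \<noteq> [] \<and> fst (hd (merge_adj ps)) = fst (hd ps)"
  by (induction ps rule: merge_adj.induct) auto

lemma merge_adj_nadj: "nadj (merge_adj ps)"
proof (induction ps rule: merge_adj.induct)
  case (3 L s L' s' ps)
  show ?case
  proof (cases "L = L'")
    case True then show ?thesis using 3 by simp
  next
    case False
    then obtain q r where "merge_adj ((L', s') # ps) = q # r" "fst q = L'"
      using merge_adj_hd[of "(L', s') # ps"] by (cases "merge_adj ((L', s') # ps)") auto
    then show ?thesis using 3 False by simp
  qed
qed auto

lemma nadj_merge_id: "nadj ps \<Longrightarrow> merge_adj ps = ps"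
  by (induction ps rule: merge_adj.induct) auto

lemma merge_adj_idem: "merge_adj (merge_adj ps) = merge_adj ps"
  by (rule nadj_merge_id[OF merge_adj_nadj])

lemma merge_adj_pos: "\<forall>p\<in>set ps. 0 < snd p \<Longrightarrow> \<forall>p\<in>set (merge_adj ps). 0 < snd p"
  by (induction ps rule: merge_adj.induct) auto

lemma merge_adj_sc: "0 < c \<Longrightarrow> merge_adj (map (sc c) ps) = map (sc c) (merge_adj ps)"
  by (induction ps rule: merge_adj.induct) (auto simp: sc_def distrib_left)

lemma merge_adj_cons_aux: "length qs \<le> m \<Longrightarrow> merge_adj (p # merge_adj qs) = merge_adj (p # qs)"
proof (induction m arbitrary: p qs)
  case 0 then show ?case by simp
next
  case (Suc m)
  show ?case
  proof (cases qs)
    case Nil then show ?thesis by simp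
  next
    case (Cons q1 r)
    show ?thesis
    proof (cases r)
      case Nil then show ?thesis using Cons by simp
    next
      case (Cons q2 r')
      obtain L s where p: "p = (L, s)" by fastforce
      obtain L1 s1 where q1: "q1 = (L1, s1)" by fastforce
      obtain L2 s2 where q2: "q2 = (L2, s2)" by fastforce
      have len: "length ((L1, s1+s2) # r') \<le> m" "length ((L2, s2) # r') \<le> m"
        using Suc.prems \<open>qs = q1 # r\<close> Cons by auto
      show ?thesis
      proof (cases "L1 = L2")
        case True
        then show ?thesis
          using Suc.IH[OF len(1), of p] \<open>qs = q1 # r\<close> Cons p q1 q2
          by (auto simp: add.assoc)
      next
        case False
        show ?thesis
        proof (cases "L = L1")
          case True
          then show ?thesis
            using Suc.IH[OF len(2), of "(L, s + s1)"] \<open>qs = q1 # r\<close> Cons p q1 q2 False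
            by auto
        next
          case False2: False
          have "merge_adj ((L1, s1) # merge_adj ((L2, s2) # r')) = merge_adj ((L1, s1) # (L2, s2) # r')"
            using Suc.IH[OF len(2)] .
          then show ?thesis
            using \<open>qs = q1 # r\<close> Cons p q1 q2 False False2 by auto
        qed
      qed
    qed
  qed
qed

lemma merge_adj_cons: "merge_adj (p # merge_adj qs) = merge_adj (p # qs)"
  using merge_adj_cons_aux by blast



definition nrm :: "('b \<times> real) list \<Rightarrow> ('b \<times> real) list" where
  "nrm ps = merge_adj (filter (\<lambda>p. 0 < snd p) ps)"

definition Z :: "'b list \<Rightarrow> (nat \<Rightarrow> real) \<Rightarrow> ('b \<times> real) list" where
  "Z x t = map (\<lambda>i. (x ! i, t i)) [0..<length x]"

lemma pt_nrm: "pt x t = nrm (Z x t)"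
  by (simp add: pt_def nrm_def Z_def)

lemma filter_pos_id: "\<forall>p\<in>set ps. 0 < snd p \<Longrightarrow> filter (\<lambda>p. 0 < snd p) ps = ps"
  by (simp add: filter_id_conv)

lemma nrm_pos: "\<forall>p\<in>set (nrm ps). 0 < snd p"
  unfolding nrm_def by (rule merge_adj_pos) auto

lemma nrm_nrm: "nrm (nrm ps) = nrm ps"
proof -
  have "nrm (nrm ps) = merge_adj (nrm ps)"
    using nrm_pos[of ps] unfolding nrm_def[of "nrm ps"] by (simp only: filter_pos_id)
  also have "\<dots> = nrm ps" unfolding nrm_def by (rule merge_adj_idem)
  finally show ?thesis .
qed

lemma filter_sc: "0 < c \<Longrightarrow> filter (\<lambda>p. 0 < snd p) (map (sc c) ps) = map (sc c) (filter (\<lambda>p. 0 < snd p) ps)"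
  by (induction ps) (auto simp: sc_def zero_less_mult_iff)

lemma filter_sc0: "filter (\<lambda>p. 0 < snd p) (map (sc 0) ps) = []"
  by (induction ps) (auto simp: sc_def)

lemma nrm_cons_nrm:
  assumes "0 \<le> c"
  shows "nrm (p # map (sc c) (nrm ps)) = nrm (p # map (sc c) ps)"
proof (cases "c = 0")
  case True
  then show ?thesis by (simp add: nrm_def filter_sc0)
next
  case False
  then have c: "0 < c" using assms by simp
  define q where "q = filter (\<lambda>p. 0 < snd p) (map (sc c) ps)"
  have q_pos: "\<forall>p\<in>set q. 0 < snd p" by (simp add: q_def)
  have 1: "map (sc c) (nrm ps) = merge_adj q"
    by (simp add: nrm_def q_def merge_adj_sc[OF c] filter_sc[OF c])
  have 2: "filter (\<lambda>p. 0 < snd p) (merge_adj q) = merge_adj q"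
    using merge_adj_pos[OF q_pos] by (simp add: filter_pos_id)
  show ?thesis
  proof (cases "0 < snd p")
    case True
    then show ?thesis unfolding 1 unfolding nrm_def by (simp add: 2 q_def[symmetric] merge_adj_cons)
  next
    case False
    then show ?thesis unfolding 1 unfolding nrm_def by (simp add: 2 q_def[symmetric] merge_adj_idem)
  qed
qed

definition shift :: "real \<Rightarrow> (nat \<Rightarrow> real) \<Rightarrow> nat \<Rightarrow> real" where
  "shift s t = (\<lambda>i. if i = 0 then s else (1 - s) * t (i - 1))"

definition HH :: "'b \<Rightarrow> real \<times> ('b \<times> real) list \<Rightarrow> ('b \<times> real) list" where
  "HH L z = pt (L # map fst (snd z)) (\<lambda>i. if i = 0 then fst z else (1 - fst z) * snd (snd z ! (i - 1)))"

lemma Z_shift: "Z (L # x) (shift s t) = (L, s) # map (sc (1 - s)) (Z x t)"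
  by (rule nth_equalityI) (auto simp del: upt_Suc simp: Z_def shift_def sc_def nth_Cons')

lemma HH_eq: "HH L (s, p) = nrm ((L, s) # map (sc (1 - s)) p)"
proof -
  have "map (\<lambda>i. ((L # map fst p) ! i, if i = 0 then s else (1 - s) * snd (p ! (i - 1)))) [0..<length (L # map fst p)]
     = (L, s) # map (sc (1 - s)) p" (is "?l = ?r")
    by (rule nth_equalityI) (auto simp del: upt_Suc simp: sc_def nth_Cons')
  then show ?thesis by (simp only: HH_def pt_def fst_conv snd_conv nrm_def)
qed

lemma HH_pt: "s \<le> 1 \<Longrightarrow> HH L (s, pt x t) = pt (L # x) (shift s t)"
  by (simp add: HH_eq pt_nrm Z_shift nrm_cons_nrm)

lemma HH_0: "HH L (0, pt x t) = pt x t"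
proof -
  have m1: "map (sc 1) ps = ps" for ps :: "('b \<times> real) list"
    by (induction ps) (auto simp: sc_def)
  show ?thesis by (simp add: HH_eq pt_nrm m1 nrm_def[of "(L, 0) # _"] nrm_nrm[unfolded nrm_def[of "nrm _"]])
qed

lemma HH_1: "HH L (1, p) = [(L, 1)]"
  by (simp add: HH_eq nrm_def filter_sc0)



lemma linord_flip:
  assumes "linord_on A L" "a \<in> A" "b \<in> A" "a \<noteq> b"
  shows "((a, b) \<in> L) \<longleftrightarrow> (b, a) \<notin> L"
  using assms unfolding linord_on_def linear_order_on_def partial_order_on_def total_on_def antisym_def
  by blast

lemma wt_sym:
  assumes "\<forall>L\<in>set x. linord_on A L" "a \<in> A" "b \<in> A" "a \<noteq> b"
  shows "wt x a b = wt x b a"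
proof -
  have "{i. 1 \<le> i \<and> i < length x \<and> (((a, b) \<in> x ! (i - 1)) \<noteq> ((a, b) \<in> x ! i))}
      = {i. 1 \<le> i \<and> i < length x \<and> (((b, a) \<in> x ! (i - 1)) \<noteq> ((b, a) \<in> x ! i))}"
  proof (intro Collect_cong conj_cong refl)
    fix i assume "1 \<le> i" "i < length x"
    then have "linord_on A (x ! (i - 1))" "linord_on A (x ! i)" using assms(1) by auto
    then show "(((a, b) \<in> x ! (i - 1)) \<noteq> ((a, b) \<in> x ! i)) = (((b, a) \<in> x ! (i - 1)) \<noteq> ((b, a) \<in> x ! i))"
      using linord_flip assms(2-4) by metis
  qed
  then show ?thesis by (simp add: wt_def)
qed

lemma wt_cons:
  assumes "x \<noteq> []"
  shows "wt (L # x) a b = wt x a b + (if ((a, b) \<in> L) \<noteq> ((a, b) \<in> x ! 0) then 1 else 0)"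
proof -
  define D where "D y i = (((a, b) \<in> y ! (i - 1)) \<noteq> ((a, b) \<in> y ! i))" for y :: "'a rel list" and i
  define S where "S = {i. 1 \<le> i \<and> i < length x \<and> D x i}"
  have eq: "{i. 1 \<le> i \<and> i < length (L # x) \<and> D (L # x) i}
       = (if D (L # x) 1 then {1} else {}) \<union> Suc ` S"
  proof -
    have "i \<in> {i. 1 \<le> i \<and> i < length (L # x) \<and> D (L # x) i} \<longleftrightarrow> i \<in> (if D (L # x) 1 then {1} else {}) \<union> Suc ` S" for i
    proof (cases i)
      case 0 then show ?thesis by auto
    next
      case (Suc j)
      show ?thesis
      proof (cases j)
        case 0 then show ?thesis using Suc assms by (auto simp: S_def)
      next
        case (Suc k)
        then show ?thesis using \<open>i = Suc j\<close> by (auto simp: S_def D_def)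
      qed
    qed
    then show ?thesis by blast
  qed
  have fin: "finite S" by (simp add: S_def)
  have "card ((if D (L # x) 1 then {1} else {}) \<union> Suc ` S) = (if D (L # x) 1 then 1 else 0) + card S"
  proof -
    have n1: "1 \<notin> Suc ` S" by (auto simp: S_def)
    have "card (Suc ` S) = card S" by (simp add: card_image)
    then show ?thesis using n1 fin by (simp add: card_insert_disjoint)
  qed
  moreover have "D (L # x) 1 = (((a, b) \<in> L) \<noteq> ((a, b) \<in> x ! 0))" by (simp add: D_def)
  ultimately show ?thesis
    unfolding wt_def using eq by (simp add: D_def S_def)
qed

lemma gamma_pos: "0 < gamma A x a b \<longleftrightarrow> a \<in> A \<and> b \<in> A \<and> a \<noteq> b \<and> (a, b) \<in> x ! 0"
  by (simp add: gamma_def wt_def)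

lemma cone_closed:
  assumes g: "g \<in> G n A" and L: "linord_on A L" and Lg: "\<forall>a b. 0 < g a b \<longrightarrow> (a, b) \<in> L"
    and x: "x \<in> Gamma_g A g"
  shows "L # x \<in> Gamma_g A g"
proof -
  have xG: "x \<noteq> []" "\<forall>L\<in>set x. linord_on A L" and le: "graph_le (gamma A x) g"
    using x by (auto simp: Gamma_g_def Gamma_def)
  have "graph_le (gamma A (L # x)) g"
    unfolding graph_le_def
  proof (intro allI impI)
    fix a b assume "0 < gamma A (L # x) a b"
    then have ab: "a \<in> A" "b \<in> A" "a \<noteq> b" "(a, b) \<in> L"
      using gamma_pos[of A "L # x" a b] by simp_all
    then have gw: "gamma A (L # x) a b = wt (L # x) a b" by (simp add: gamma_def)
    have "\<not> 0 < g b a" using Lg ab L linord_flip by metis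
    moreover have "\<forall>a\<in>A. \<forall>b\<in>A. a \<noteq> b \<longrightarrow> (0 < g a b \<longleftrightarrow> \<not> 0 < g b a)"
      using g unfolding G_def by (elim CollectE conjE)
    ultimately have gab: "0 < g a b" using ab by blast
    have x0: "linord_on A (x ! 0)" using xG by auto
    show "0 < g a b \<and> gamma A (L # x) a b \<le> g a b \<or> 0 < g b a \<and> gamma A (L # x) a b < g b a"
    proof (cases "(a, b) \<in> x ! 0")
      case True
      then have p1: "0 < gamma A x a b" and p2: "gamma A x a b = wt x a b" using ab by (simp_all add: gamma_pos gamma_def wt_def)
      have "0 < g a b \<and> gamma A x a b \<le> g a b \<or> 0 < g b a \<and> gamma A x a b < g b a"
        using le p1 unfolding graph_le_def by blast
      then have "wt x a b \<le> g a b" using p2 \<open>\<not> 0 < g b a\<close> by simp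
      then show ?thesis using gw wt_cons[OF xG(1)] True ab gab by simp
    next
      case False
      then have ba: "(b, a) \<in> x ! 0" using linord_flip[OF x0 ab(1,2,3)] by blast
      then have p1: "0 < gamma A x b a" and p2: "gamma A x b a = wt x b a" using ab by (simp_all add: gamma_pos gamma_def wt_def)
      have "0 < g b a \<and> gamma A x b a \<le> g b a \<or> 0 < g a b \<and> gamma A x b a < g a b"
        using le p1 unfolding graph_le_def by blast
      then have "wt x b a < g a b" using p2 \<open>\<not> 0 < g b a\<close> by simp
      moreover have "wt x b a = wt x a b" using wt_sym[OF xG(2) ab(1-3)] by simp
      ultimately show ?thesis using gw wt_cons[OF xG(1)] False ab gab by simp
    qed
  qed
  then show ?thesis using xG L by (simp add: Gamma_g_def Gamma_def)
qed

lemma exists_Lstar: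
  assumes fin: "finite A" and g: "g \<in> G n A"
  shows "\<exists>L. linord_on A L \<and> (\<forall>a b. 0 < g a b \<longrightarrow> (a, b) \<in> L)"
proof -
  define E where "E = wgraph_edges g"
  have gP: "(\<forall>a b. 0 < g a b \<longrightarrow> a \<in> A \<and> b \<in> A \<and> a \<noteq> b \<and> g a b \<le> n)
             \<and> (\<forall>a\<in>A. \<forall>b\<in>A. a \<noteq> b \<longrightarrow> (0 < g a b \<longleftrightarrow> \<not> 0 < g b a))
             \<and> acyclic (wgraph_edges g)" using g unfolding G_def by (rule CollectD)
  have acyc: "acyclic E" unfolding E_def using gP by (elim conjE)
  have gA: "\<And>a b. 0 < g a b \<Longrightarrow> a \<in> A \<and> b \<in> A" using gP by (elim conjE) blast
  define r where "r a = card {c \<in> A. (c, a) \<in> E\<^sup>+}" for a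
  have rlt: "r a < r b" if "0 < g a b" for a b
  proof -
    have ab: "a \<in> A" "b \<in> A" using gA[OF that] by auto
    have e: "(a, b) \<in> E" using that by (simp add: E_def wgraph_edges_def)
    define P where "P = {c \<in> A. (c, a) \<in> E\<^sup>+}"
    define Q where "Q = {c \<in> A. (c, b) \<in> E\<^sup>+}"
    have sub: "insert a P \<subseteq> Q"
      using e ab unfolding P_def Q_def by (auto intro: trancl_into_trancl)
    have nin: "a \<notin> P" using acyc unfolding P_def by (auto simp: acyclic_def)
    have fP: "finite P" and fQ: "finite Q" using fin unfolding P_def Q_def by auto
    have "card (insert a P) \<le> card Q" by (rule card_mono[OF fQ sub])
    moreover have "card (insert a P) = Suc (card P)" by (rule card_insert_disjoint[OF fP nin])
    ultimately have "card P < card Q" by simp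
    then show ?thesis unfolding r_def P_def Q_def .
  qed
  obtain f :: "'a \<Rightarrow> nat" and m where fm: "f ` A = {i. i < m}" "inj_on f A"
    using finite_imp_inj_to_nat_seg[OF fin] by blast
  define k where "k a = r a * m + f a" for a
  have klt: "k a < k b" if "0 < g a b" for a b
  proof -
    have "a \<in> A" using gA[OF that] by auto
    then have "f a < m" using fm by auto
    moreover have "Suc (r a) \<le> r b" using rlt[OF that] by simp
    then have "Suc (r a) * m \<le> r b * m" by (rule mult_right_mono) simp
    ultimately show ?thesis unfolding k_def by simp
  qed
  have kinj: "inj_on k A"
  proof (rule inj_onI)
    fix a b assume ab: "a \<in> A" "b \<in> A" "k a = k b"
    have fa: "f a < m" "f b < m" using ab fm by auto
    have "r a = r b"
    proof (rule ccontr)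
      assume "r a \<noteq> r b"
      then consider "Suc (r a) \<le> r b" | "Suc (r b) \<le> r a" by linarith
      then show False
      proof cases
        case 1 then have "Suc (r a) * m \<le> r b * m" by (rule mult_right_mono) simp
        then show False using ab fa by (simp add: k_def)
      next
        case 2 then have "Suc (r b) * m \<le> r a * m" by (rule mult_right_mono) simp
        then show False using ab fa by (simp add: k_def)
      qed
    qed
    then have "f a = f b" using ab by (simp add: k_def)
    then show "a = b" using fm ab by (meson inj_onD)
  qed
  define L where "L = {(a, b). a \<in> A \<and> b \<in> A \<and> k a \<le> k b}"
  have "linord_on A L"
    unfolding linord_on_def linear_order_on_def partial_order_on_def preorder_on_def
  proof (intro conjI)
    show "refl_on A L" unfolding refl_on_def L_def by auto
    show "trans L" unfolding trans_def L_def by auto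
    show "antisym L" unfolding antisym_def L_def using kinj by (auto simp: inj_on_def)
    show "total_on A L" unfolding total_on_def L_def by auto
    show "L \<subseteq> A \<times> A" unfolding L_def by auto
    show "L \<subseteq> A \<times> A" unfolding L_def by auto
  qed
  moreover have "\<forall>a b. 0 < g a b \<longrightarrow> (a, b) \<in> L"
    using klt gA by (auto simp: L_def less_imp_le)
  ultimately show ?thesis by blast
qed



lemma istop_real: "istopology (\<lambda>U. U \<subseteq> realization_carrier X \<and>
      (\<forall>x\<in>X. openin (simplex_top (length x - 1))
                {t \<in> standard_simplex (length x - 1). pt x t \<in> U}))"
proof -
  define P where "P = (\<lambda>U. U \<subseteq> realization_carrier X \<and>
      (\<forall>x\<in>X. openin (simplex_top (length x - 1))
                {t \<in> standard_simplex (length x - 1). pt x t \<in> U}))"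
  have h1: "P (S \<inter> T)" if S: "P S" and T: "P T" for S T
    unfolding P_def
  proof (intro conjI ballI)
    show "S \<inter> T \<subseteq> realization_carrier X" using S by (auto simp: P_def)
    fix x assume "x \<in> X"
    then have "openin (simplex_top (length x - 1)) ({t \<in> standard_simplex (length x - 1). pt x t \<in> S} \<inter> {t \<in> standard_simplex (length x - 1). pt x t \<in> T})"
      using S T unfolding P_def by (intro openin_Int) auto
    moreover have "{t \<in> standard_simplex (length x - 1). pt x t \<in> S} \<inter> {t \<in> standard_simplex (length x - 1). pt x t \<in> T}
       = {t \<in> standard_simplex (length x - 1). pt x t \<in> S \<inter> T}" by blast
    ultimately show "openin (simplex_top (length x - 1)) {t \<in> standard_simplex (length x - 1). pt x t \<in> S \<inter> T}" by simp
  qed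
  have h2: "P (\<Union>K)" if K: "\<forall>S\<in>K. P S" for K
    unfolding P_def
  proof (intro conjI ballI)
    show "\<Union>K \<subseteq> realization_carrier X" using K by (auto simp: P_def)
    fix x assume "x \<in> X"
    then have "openin (simplex_top (length x - 1)) (\<Union>S\<in>K. {t \<in> standard_simplex (length x - 1). pt x t \<in> S})"
      using K unfolding P_def by (intro openin_Union) auto
    moreover have "(\<Union>S\<in>K. {t \<in> standard_simplex (length x - 1). pt x t \<in> S})
       = {t \<in> standard_simplex (length x - 1). pt x t \<in> \<Union>K}" by blast
    ultimately show "openin (simplex_top (length x - 1)) {t \<in> standard_simplex (length x - 1). pt x t \<in> \<Union>K}" by simp
  qed
  have "istopology P" unfolding istopology_def using h1 h2 by blast
  then show ?thesis unfolding P_def .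
qed

lemma openin_real: "openin (realization X) U \<longleftrightarrow> U \<subseteq> realization_carrier X \<and>
      (\<forall>x\<in>X. openin (simplex_top (length x - 1))
                {t \<in> standard_simplex (length x - 1). pt x t \<in> U})"
  unfolding realization_def topology_inverse'[OF istop_real] by (rule refl)

lemma topspace_simplex_top [simp]: "topspace (simplex_top k) = standard_simplex k"
  by (simp add: simplex_top_def)

lemma pt_in_carrier: "x \<in> X \<Longrightarrow> t \<in> standard_simplex (length x - 1) \<Longrightarrow> pt x t \<in> realization_carrier X"
  by (auto simp: realization_carrier_def)

lemma topspace_real [simp]: "topspace (realization X) = realization_carrier X"
proof
  show "topspace (realization X) \<subseteq> realization_carrier X"
    using openin_real[of X "topspace (realization X)"] by simp
  have "openin (realization X) (realization_carrier X)"
    unfolding openin_real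
  proof (intro conjI ballI order_refl)
    fix x assume "x \<in> X"
    then have "{t \<in> standard_simplex (length x - 1). pt x t \<in> realization_carrier X} = topspace (simplex_top (length x - 1))"
      using pt_in_carrier by auto
    then show "openin (simplex_top (length x - 1)) {t \<in> standard_simplex (length x - 1). pt x t \<in> realization_carrier X}"
      by (metis openin_topspace)
  qed
  then show "realization_carrier X \<subseteq> topspace (realization X)" by (rule openin_subset)
qed

lemma prodq:
  fixes X :: "'b list set"
  assumes W: "W \<subseteq> {0..1} \<times> realization_carrier X"
    and op: "\<And>x. x \<in> X \<Longrightarrow> openin (prod_topology (top_of_set {0..1::real}) (simplex_top (length x - 1)))
                 {z \<in> {0..1} \<times> standard_simplex (length x - 1). (fst z, pt x (snd z)) \<in> W}"
  shows "openin (prod_topology (top_of_set {0..1::real}) (realization X)) W"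
  unfolding openin_subopen[of _ W]
proof (intro ballI)
  fix z assume z: "z \<in> W"
  obtain s0 p0 where z0: "z = (s0, p0)" by fastforce
  have s0: "s0 \<in> {0..1}" and p0: "p0 \<in> realization_carrier X" using W z z0 by auto
  then obtain x0 t0 where x0: "x0 \<in> X" and t0: "t0 \<in> standard_simplex (length x0 - 1)" and p0e: "p0 = pt x0 t0"
    by (auto simp: realization_carrier_def)
  define Wx where "Wx x = {z \<in> {0..1} \<times> standard_simplex (length x - 1). (fst z, pt x (snd z)) \<in> W}" for x
  have opx: "openin (prod_topology (top_of_set {0..1::real}) (simplex_top (length x - 1))) (Wx x)" if "x \<in> X" for x
    unfolding Wx_def using op[OF that] .
  have cm: "continuous_map (top_of_set {0..1::real}) (prod_topology (top_of_set {0..1::real}) (simplex_top (length x0 - 1))) (\<lambda>s. (s, t0))"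
    using t0 by (auto intro!: continuous_map_pairedI simp: continuous_map_id [unfolded id_def])
  have "openin (top_of_set {0..1::real}) {s \<in> topspace (top_of_set {0..1::real}). (s, t0) \<in> Wx x0}"
    by (rule openin_continuous_map_preimage[OF cm opx[OF x0]])
  moreover have "s0 \<in> {s \<in> topspace (top_of_set {0..1::real}). (s, t0) \<in> Wx x0}"
    using s0 t0 z z0 p0e by (auto simp: Wx_def)
  ultimately obtain e where e: "0 < e" "\<And>s'. s' \<in> {0..1} \<Longrightarrow> dist s' s0 < e \<Longrightarrow> (s', t0) \<in> Wx x0"
    unfolding openin_euclidean_subtopology_iff by force
  define N where "N = {0..1} \<inter> cball s0 (e / 2)"
  have Ncomp: "compactin (top_of_set {0..1::real}) N"
    unfolding N_def compactin_subtopology by (auto intro: compact_Int_closed)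
  have NS: "(s', p0) \<in> W" if "s' \<in> N" for s'
  proof -
    have "dist s' s0 < e" using that e(1) by (auto simp: N_def dist_commute)
    then show ?thesis using e(2)[of s'] that p0e by (auto simp: N_def Wx_def)
  qed
  define V where "V = {p \<in> realization_carrier X. \<forall>s\<in>N. (s, p) \<in> W}"
  have Vopen: "openin (realization X) V"
    unfolding openin_real
  proof (intro conjI ballI)
    show "V \<subseteq> realization_carrier X" by (auto simp: V_def)
    fix x assume x: "x \<in> X"
    show "openin (simplex_top (length x - 1)) {t \<in> standard_simplex (length x - 1). pt x t \<in> V}"
      unfolding openin_subopen[of _ "{t \<in> standard_simplex (length x - 1). pt x t \<in> V}"]
    proof (intro ballI)
      fix t assume t: "t \<in> {t \<in> standard_simplex (length x - 1). pt x t \<in> V}"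
      have "N \<times> {t} \<subseteq> Wx x" using t by (auto simp: V_def Wx_def N_def)
      moreover have "t \<in> topspace (simplex_top (length x - 1))" using t by simp
      ultimately obtain U V' where UV: "openin (top_of_set {0..1::real}) U" "openin (simplex_top (length x - 1)) V'"
          "N \<subseteq> U" "t \<in> V'" "U \<times> V' \<subseteq> Wx x"
        using tube_lemma_left[OF opx[OF x] Ncomp] by metis
      have "V' \<subseteq> {t \<in> standard_simplex (length x - 1). pt x t \<in> V}"
      proof
        fix t' assume t': "t' \<in> V'"
        then have t'S: "t' \<in> standard_simplex (length x - 1)"
          using openin_subset[OF UV(2)] by auto
        have "(s, pt x t') \<in> W" if "s \<in> N" for s
        proof -
          have "(s, t') \<in> Wx x" using UV(3,5) that t' by blast
          then show ?thesis by (simp add: Wx_def)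
        qed
        then show "t' \<in> {t \<in> standard_simplex (length x - 1). pt x t \<in> V}"
          using t'S pt_in_carrier[OF x t'S] by (auto simp: V_def)
      qed
      then show "\<exists>T. openin (simplex_top (length x - 1)) T \<and> t \<in> T \<and> T \<subseteq> {t \<in> standard_simplex (length x - 1). pt x t \<in> V}"
        using UV by blast
    qed
  qed
  define T where "T = ({0..1} \<inter> ball s0 (e / 2)) \<times> V"
  have "openin (top_of_set {0..1::real}) ({0..1} \<inter> ball s0 (e / 2))"
    by (auto intro: openin_open_Int)
  then have "openin (prod_topology (top_of_set {0..1::real}) (realization X)) T"
    unfolding T_def using Vopen by (simp add: openin_prod_Times_iff)
  moreover have "z \<in> T" using z0 s0 p0 NS e(1) by (auto simp: T_def V_def)
  moreover have "T \<subseteq> W" using e(1) by (auto simp: T_def V_def N_def)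
  ultimately show "\<exists>T. openin (prod_topology (top_of_set {0..1::real}) (realization X)) T \<and> z \<in> T \<and> T \<subseteq> W"
    by blast
qed



lemma shift_simplex:
  assumes t: "t \<in> standard_simplex k" and s: "s \<in> {0..1}"
  shows "shift s t \<in> standard_simplex (Suc k)"
proof -
  have t1: "\<forall>i. 0 \<le> t i \<and> t i \<le> 1" "\<forall>i>k. t i = 0" "(\<Sum>i\<le>k. t i) = 1"
    using t by (auto simp: standard_simplex_def)
  have "0 \<le> shift s t i \<and> shift s t i \<le> 1" for i
  proof (cases "i = 0")
    case True then show ?thesis using s by (simp add: shift_def)
  next
    case False
    have "(1 - s) * t (i - 1) \<le> 1 * 1" using s t1(1) by (intro mult_mono) auto
    then show ?thesis using False s t1(1) by (simp add: shift_def)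
  qed
  moreover have "\<forall>i>Suc k. shift s t i = 0" using t1(2) by (simp add: shift_def)
  moreover have "(\<Sum>i\<le>Suc k. shift s t i) = 1"
  proof -
    have "(\<Sum>i\<le>Suc k. shift s t i) = s + (\<Sum>i\<le>k. (1 - s) * t i)"
      by (simp only: sum.atMost_Suc_shift) (simp add: shift_def)
    also have "\<dots> = 1" by (simp add: sum_distrib_left[symmetric] t1(3))
    finally show ?thesis .
  qed
  ultimately show ?thesis by (simp add: standard_simplex_def)
qed

lemma shift_cont:
  "continuous_map (prod_topology (top_of_set {0..1::real}) (simplex_top k)) (simplex_top (Suc k))
     (\<lambda>z. shift (fst z) (snd z))"
  unfolding simplex_top_def continuous_map_in_subtopology
proof
  have fc: "continuous_map (prod_topology (top_of_set {0..1::real}) (subtopology (powertop_real UNIV) (standard_simplex k))) euclideanreal fst"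
    by (rule continuous_map_into_fulltopology[OF continuous_map_fst])
  have pc: "continuous_map (prod_topology (top_of_set {0..1::real}) (subtopology (powertop_real UNIV) (standard_simplex k))) euclideanreal (\<lambda>z. snd z j)" for j
  proof -
    have "continuous_map (subtopology (powertop_real UNIV) (standard_simplex k)) euclideanreal (\<lambda>x. x j)"
      by (rule continuous_map_from_subtopology[OF continuous_map_product_projection]) simp
    then show ?thesis using continuous_map_compose[OF continuous_map_snd] by (simp add: o_def)
  qed
  show "continuous_map (prod_topology (top_of_set {0..1::real}) (subtopology (powertop_real UNIV) (standard_simplex k)))
     (powertop_real UNIV) (\<lambda>z. shift (fst z) (snd z))"
    unfolding continuous_map_componentwise_UNIV
  proof
    fix i
    show "continuous_map (prod_topology (top_of_set {0..1::real}) (subtopology (powertop_real UNIV) (standard_simplex k))) euclideanreal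
       (\<lambda>z. shift (fst z) (snd z) i)"
    proof (cases "i = 0")
      case True then show ?thesis using fc by (simp add: shift_def)
    next
      case False
      have "continuous_map (prod_topology (top_of_set {0..1::real}) (subtopology (powertop_real UNIV) (standard_simplex k))) euclideanreal
          (\<lambda>z. (1 - fst z) * snd z (i - 1))"
        by (intro continuous_map_real_mult continuous_map_diff continuous_map_const[THEN iffD2] fc pc) simp
      then show ?thesis using False by (simp add: shift_def)
    qed
  qed
  show "(\<lambda>z. shift (fst z) (snd z)) \<in> topspace (prod_topology (top_of_set {0..1}) (subtopology (powertop_real UNIV) (standard_simplex k))) \<rightarrow> standard_simplex (Suc k)"
    using shift_simplex by auto
qed



lemma HH_cont:
  fixes X :: "'b rel list set" and L :: "'b rel"
  assumes cone: "\<And>x. x \<in> X \<Longrightarrow> L # x \<in> X" and ne: "\<And>x. x \<in> X \<Longrightarrow> x \<noteq> []"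
  shows "continuous_map (prod_topology (top_of_set {0..1::real}) (realization X)) (realization X) (HH L)"
  unfolding continuous_map_def
proof (intro conjI allI impI)
  have img: "HH L (s, pt x t) \<in> realization_carrier X \<and> HH L (s, pt x t) = pt (L # x) (shift s t)
          \<and> shift s t \<in> standard_simplex (length (L # x) - 1)"
    if x: "x \<in> X" and t: "t \<in> standard_simplex (length x - 1)" and s: "s \<in> {0..1}" for x t s
  proof -
    have sh: "shift s t \<in> standard_simplex (length (L # x) - 1)"
      using shift_simplex[OF t s] ne[OF x] by simp
    moreover have "HH L (s, pt x t) = pt (L # x) (shift s t)" using s by (simp add: HH_pt)
    ultimately show ?thesis using pt_in_carrier[OF cone[OF x] sh] by simp
  qed
  show "HH L \<in> topspace (prod_topology (top_of_set {0..1}) (realization X)) \<rightarrow> topspace (realization X)"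
  proof
    fix z assume "z \<in> topspace (prod_topology (top_of_set {0..1::real}) (realization X))"
    then obtain s p where z: "z = (s, p)" "s \<in> {0..1}" "p \<in> realization_carrier X" by auto
    then obtain x t where xt: "x \<in> X" "t \<in> standard_simplex (length x - 1)" "p = pt x t"
      by (auto simp: realization_carrier_def)
    have "HH L (s, pt x t) \<in> realization_carrier X" using img[OF xt(1,2) z(2)] by (rule conjunct1)
    then show "HH L z \<in> topspace (realization X)" using z xt by simp
  qed
  fix U assume U: "openin (realization X) U"
  show "openin (prod_topology (top_of_set {0..1}) (realization X))
          {z \<in> topspace (prod_topology (top_of_set {0..1}) (realization X)). HH L z \<in> U}"
  proof (rule prodq)
    show "{z \<in> topspace (prod_topology (top_of_set {0..1}) (realization X)). HH L z \<in> U} \<subseteq> {0..1} \<times> realization_carrier X"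
      by auto
    fix x assume x: "x \<in> X"
    define k where "k = length x - 1"
    have lk: "length (L # x) - 1 = Suc k" using ne[OF x] by (simp add: k_def)
    have opU: "openin (simplex_top (Suc k)) {u \<in> standard_simplex (Suc k). pt (L # x) u \<in> U}"
      using U cone[OF x] unfolding openin_real lk[symmetric] by blast
    have "openin (prod_topology (top_of_set {0..1::real}) (simplex_top k))
        {z \<in> topspace (prod_topology (top_of_set {0..1::real}) (simplex_top k)).
           shift (fst z) (snd z) \<in> {u \<in> standard_simplex (Suc k). pt (L # x) u \<in> U}}"
      by (rule openin_continuous_map_preimage[OF shift_cont opU])
    moreover have "{z \<in> topspace (prod_topology (top_of_set {0..1::real}) (simplex_top k)).
           shift (fst z) (snd z) \<in> {u \<in> standard_simplex (Suc k). pt (L # x) u \<in> U}}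
       = {z \<in> {0..1} \<times> standard_simplex (length x - 1).
            (fst z, pt x (snd z)) \<in> {z \<in> topspace (prod_topology (top_of_set {0..1}) (realization X)). HH L z \<in> U}}"
      unfolding set_eq_iff
    proof (intro allI)
      fix z :: "real \<times> (nat \<Rightarrow> real)"
      obtain s t where z: "z = (s, t)" by fastforce
      show "z \<in> {z \<in> topspace (prod_topology (top_of_set {0..1::real}) (simplex_top k)).
           shift (fst z) (snd z) \<in> {u \<in> standard_simplex (Suc k). pt (L # x) u \<in> U}} \<longleftrightarrow>
          z \<in> {z \<in> {0..1} \<times> standard_simplex (length x - 1).
            (fst z, pt x (snd z)) \<in> {z \<in> topspace (prod_topology (top_of_set {0..1}) (realization X)). HH L z \<in> U}}"
      proof (cases "s \<in> {0..1} \<and> t \<in> standard_simplex k")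
        case True
        then have "t \<in> standard_simplex (length x - 1)" by (simp add: k_def)
        with img[OF x this, of s] pt_in_carrier[OF x this] True show ?thesis using lk z by (auto simp: k_def)
      next
        case False
        then show ?thesis using z by (auto simp: k_def)
      qed
    qed
    ultimately show "openin (prod_topology (top_of_set {0..1}) (simplex_top (length x - 1)))
         {z \<in> {0..1} \<times> standard_simplex (length x - 1).
            (fst z, pt x (snd z)) \<in> {z \<in> topspace (prod_topology (top_of_set {0..1}) (realization X)). HH L z \<in> U}}"
      by (simp add: k_def)
  qed
qed

theorem lemma6:
  fixes A :: "'a set" and n :: nat and g :: "'a \<Rightarrow> 'a \<Rightarrow> nat"
  assumes "1 \<le> n" and "finite A" and "g \<in> G n A"
  shows "contractible_space (realization (Gamma_g A g))"
proof -
  obtain L where L: "linord_on A L" "\<forall>a b. 0 < g a b \<longrightarrow> (a, b) \<in> L"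
    using exists_Lstar[OF assms(2,3)] by blast
  define X where "X = Gamma_g A g"
  have cone: "\<And>x. x \<in> X \<Longrightarrow> L # x \<in> X" unfolding X_def using cone_closed[OF assms(3) L] by blast
  have ne: "\<And>x. x \<in> X \<Longrightarrow> x \<noteq> []" unfolding X_def by (simp add: Gamma_g_def Gamma_def)
  define h where "h z = (if fst z = 0 then snd z else HH L z)" for z
  have hc: "continuous_map (prod_topology (top_of_set {0..1::real}) (realization X)) (realization X) h"
  proof (rule continuous_map_eq[OF HH_cont[OF cone ne]])
    fix z assume "z \<in> topspace (prod_topology (top_of_set {0..1::real}) (realization X))"
    then obtain s p where z: "z = (s, p)" "p \<in> realization_carrier X" by auto
    then obtain x t where "p = pt x t" by (auto simp: realization_carrier_def)
    then show "HH L z = h z" using z by (auto simp: h_def HH_0)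
  qed
  have "homotopic_with (\<lambda>x. True) (realization X) (realization X) id (\<lambda>x. [(L, 1)])"
    unfolding homotopic_with_def
    by (rule exI[of _ h]) (auto simp: hc h_def HH_1)
  then show ?thesis unfolding contractible_space_def X_def by blast
qed

end
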